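(* Let $A,B$ be non-empty sets, $I$ a non-empty index set, $\{V_i\}_{i\in I}\subseteq\mathcal R(A)$, $\{W_i\}_{i\in I}\subseteq\mathcal R(B)$, and let $Z\in\mathcal R(A,B)$ be a uniform fuzzy relation such that the system $WL^{2\text{-}3}(A,B,I,V_i,W_i,Z)$ has a solution which is a uniform fuzzy relation. Then the greatest solution $R$ to $WL^{2\text{-}3}(A,B,I,V_i,W_i,Z)$ is a uniform fuzzy relation, $E_A^R$ is the greatest solution to $WL^{1\text{-}4}(A,I,V_i,Z\circ Z^{-1})$, and $E_B^R$ is the greatest solution to $WL^{1\text{-}4}(B,I,W_i,Z^{-1}\circ Z)$.
   Context: $\mathcal L=(L,\wedge,\vee,\otimes,\to,0,1)$ is a complete residuated lattice; $x\leftrightarrow y=(x\to y)\wedge(y\to x)$. For non-empty sets $X,Y$, $\mathcal R(X,Y)$ is the set of fuzzy relations $X\times Y\to L$, $\mathcal R(X)=\mathcal R(X,X)$, ordered pointwise; $R^{-1}(y,x)=R(x,y)$; $(R\circ S)(x,t)=\bigvee_{y}R(x,y)\otimes S(y,t)$. For $R\in\mathcal R(A,B)$: kernel $E_A^R(a_1,a_2)=\bigwedge_{b\in B}R(a_1,b)\leftrightarrow R(a_2,b)$; co-kernel $E_B^R(b_1,b_2)=\bigwedge_{a\in A}R(a,b_1)\leftrightarrow R(a,b_2)$. $R$ is uniform if every $a$ has some $b$ with $R(a,b)=1$, every $b$ has some $a$ with $R(a,b)=1$, and $R(a,b_1)\otimes R(a,b_2)\le E_B^R(b_1,b_2)$ for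 all $a,b_1,b_2$. $WL^{2\text{-}3}(A,B,I,V_i,W_i,Z)$ (unknown $U\in\mathcal R(A,B)$): $U^{-1}\circ V_i\le W_i\circ U^{-1}$ and $U\circ W_i\le V_i\circ U$ for all $i$, and $U\le Z$; it always has a greatest solution. $WL^{1\text{-}4}(X,I,V_i,W)$ (unknown $U\in\mathcal R(X)$): $U\circ V_i\le V_i\circ U$ and $U^{-1}\circ V_i\le V_i\circ U^{-1}$ for all $i$, and $U\le W$, $U^{-1}\le W$. *)

theory Defs
  imports Main
begin

text \<open>The least element
  bot plays the role of 0.\<close>
class complete_residuated_lattice = complete_lattice + comm_monoid_mult +
  fixes res :: "'a \<Rightarrow> 'a \<Rightarrow> 'a"
  assumes one_is_top: "(1::'a) = top"
  assumes residuation: "x * y \<le> z \<longleftrightarrow> x \<le> res y z"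

definition biimp :: "'l::complete_residuated_lattice \<Rightarrow> 'l \<Rightarrow> 'l" where
  "biimp x y = inf (res x y) (res y x)"

text \<open>Fuzzy relations X \<times> Y \<rightarrow> L are functions 'x \<Rightarrow> 'y \<Rightarrow> 'l, ordered pointwise.\<close>

definition conv :: "('x \<Rightarrow> 'y \<Rightarrow> 'l) \<Rightarrow> ('y \<Rightarrow> 'x \<Rightarrow> 'l)" where
  "conv R = (\<lambda>y x. R x y)"

definition rcomp :: "('x \<Rightarrow> 'y \<Rightarrow> 'l::complete_residuated_lattice) \<Rightarrow> ('y \<Rightarrow> 'z \<Rightarrow> 'l) \<Rightarrow> ('x \<Rightarrow> 'z \<Rightarrow> 'l)" where
  "rcomp R S = (\<lambda>x t. SUP y. R x y * S y t)"

definition kernel :: "('a \<Rightarrow> 'b \<Rightarrow> 'l::complete_residuated_lattice) \<Rightarrow> ('a \<Rightarrow> 'a \<Rightarrow> 'l)" where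
  "kernel R = (\<lambda>a1 a2. INF b. biimp (R a1 b) (R a2 b))"

definition cokernel :: "('a \<Rightarrow> 'b \<Rightarrow> 'l::complete_residuated_lattice) \<Rightarrow> ('b \<Rightarrow> 'b \<Rightarrow> 'l)" where
  "cokernel R = (\<lambda>b1 b2. INF a. biimp (R a b1) (R a b2))"

definition uniform :: "('a \<Rightarrow> 'b \<Rightarrow> 'l::complete_residuated_lattice) \<Rightarrow> bool" where
  "uniform R \<longleftrightarrow> (\<forall>a. \<exists>b. R a b = 1) \<and> (\<forall>b. \<exists>a. R a b = 1) \<and>
     (\<forall>a b1 b2. R a b1 * R a b2 \<le> cokernel R b1 b2)"

definition sol_WL23 :: "('i \<Rightarrow> 'a \<Rightarrow> 'a \<Rightarrow> 'l::complete_residuated_lattice) \<Rightarrow> ('i \<Rightarrow> 'b \<Rightarrow> 'b \<Rightarrow> 'l)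
    \<Rightarrow> ('a \<Rightarrow> 'b \<Rightarrow> 'l) \<Rightarrow> ('a \<Rightarrow> 'b \<Rightarrow> 'l) \<Rightarrow> bool" where
  "sol_WL23 V W Z U \<longleftrightarrow>
     (\<forall>i. rcomp (conv U) (V i) \<le> rcomp (W i) (conv U) \<and> rcomp U (W i) \<le> rcomp (V i) U) \<and> U \<le> Z"

definition sol_WL14 :: "('i \<Rightarrow> 'x \<Rightarrow> 'x \<Rightarrow> 'l::complete_residuated_lattice) \<Rightarrow> ('x \<Rightarrow> 'x \<Rightarrow> 'l)
    \<Rightarrow> ('x \<Rightarrow> 'x \<Rightarrow> 'l) \<Rightarrow> bool" where
  "sol_WL14 V W U \<longleftrightarrow>
     (\<forall>i. rcomp U (V i) \<le> rcomp (V i) U \<and> rcomp (conv U) (V i) \<le> rcomp (V i) (conv U)) \<and>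
     U \<le> W \<and> conv U \<le> W"

definition greatest_sol :: "('r::order \<Rightarrow> bool) \<Rightarrow> 'r \<Rightarrow> bool" where
  "greatest_sol P R \<longleftrightarrow> P R \<and> (\<forall>U. P U \<longrightarrow> U \<le> R)"

end

theory Submission
  imports Defs
begin

notation rcomp (infixl "\<bullet>" 75)

lemma mult_monoL: "x \<le> y \<Longrightarrow> x * z \<le> y * (z::'l::complete_residuated_lattice)"
  by (meson residuation order_refl order_trans)

lemma mult_monoR: "x \<le> y \<Longrightarrow> z * x \<le> z * (y::'l::complete_residuated_lattice)"
  using mult_monoL[of x y z] by (simp add: mult.commute)

lemma mult_mono2: "x \<le> y \<Longrightarrow> u \<le> v \<Longrightarrow> x * u \<le> y * (v::'l::complete_residuated_lattice)"
  by (meson mult_monoL mult_monoR order_trans)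

lemma Sup_multR: "(SUP i\<in>A. f i) * (x::'l::complete_residuated_lattice) = (SUP i\<in>A. f i * x)"
proof (rule antisym)
  show "(SUP i\<in>A. f i) * x \<le> (SUP i\<in>A. f i * x)"
    unfolding residuation
  proof (rule SUP_least)
    fix i assume "i \<in> A"
    then have "f i * x \<le> (SUP i\<in>A. f i * x)" by (rule SUP_upper)
    then show "f i \<le> res x (SUP i\<in>A. f i * x)" by (simp add: residuation)
  qed
  show "(SUP i\<in>A. f i * x) \<le> (SUP i\<in>A. f i) * x"
    by (rule SUP_least) (simp add: mult_monoL SUP_upper)
qed

lemma Sup_multL: "(x::'l::complete_residuated_lattice) * (SUP i\<in>A. f i) = (SUP i\<in>A. x * f i)"
  using Sup_multR[of f A x] by (simp add: mult.commute)

lemma res_le: "(x::'l::complete_residuated_lattice) * res x y \<le> y"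
  by (metis mult.commute order_refl residuation)

lemma comp_assoc: "(R \<bullet> S) \<bullet> T = R \<bullet> (S \<bullet> (T::_ \<Rightarrow> _ \<Rightarrow> 'l::complete_residuated_lattice))"
  unfolding rcomp_def
  by (auto simp: Sup_multR Sup_multL mult.assoc intro!: ext) (rule SUP_commute)

lemma comp_mono: "R \<le> R' \<Longrightarrow> S \<le> S' \<Longrightarrow> R \<bullet> S \<le> R' \<bullet> (S'::_ \<Rightarrow> _ \<Rightarrow> 'l::complete_residuated_lattice)"
  unfolding rcomp_def le_fun_def
  by (auto intro!: SUP_mono' mult_mono2)

lemma conv_comp: "conv (R \<bullet> S) = conv S \<bullet> conv (R::_ \<Rightarrow> _ \<Rightarrow> 'l::complete_residuated_lattice)"
  unfolding rcomp_def conv_def by (auto simp: mult.commute)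

lemma conv_conv[simp]: "conv (conv R) = R"
  unfolding conv_def by simp

lemma conv_mono: "R \<le> S \<Longrightarrow> conv R \<le> conv S"
  unfolding conv_def le_fun_def by simp

lemma comp3_le:
  assumes "\<And>y z. R x y * S y z * T z t \<le> c"
  shows "(R \<bullet> S \<bullet> (T::_ \<Rightarrow> _ \<Rightarrow> 'l::complete_residuated_lattice)) x t \<le> c"
  unfolding rcomp_def using assms
  by (auto simp: Sup_multR intro!: SUP_least)

lemma comp_ge: "R x y * S y z \<le> (R \<bullet> (S::_ \<Rightarrow> _ \<Rightarrow> 'l::complete_residuated_lattice)) x z"
  unfolding rcomp_def by (rule SUP_upper) simp

lemma comp3_ge: "R x y * S y z * T z t \<le> (R \<bullet> S \<bullet> (T::_ \<Rightarrow> _ \<Rightarrow> 'l::complete_residuated_lattice)) x t"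
  by (meson comp_ge mult_monoL order_trans)

definition difun :: "('a \<Rightarrow> 'b \<Rightarrow> 'l::complete_residuated_lattice) \<Rightarrow> bool" where
  "difun R \<longleftrightarrow> R \<bullet> conv R \<bullet> R \<le> R"

lemma difun_pt: "difun R \<Longrightarrow> R a b * R a' b * R a' t \<le> R a t"
  unfolding difun_def le_fun_def
  by (metis comp3_ge conv_def order_trans)

lemma uniform_difun:
  assumes "\<forall>a b1 b2. R a b1 * R a b2 \<le> cokernel R b1 b2"
  shows "difun R"
  unfolding difun_def le_fun_def
proof (intro allI comp3_le)
  fix a t a' b
  have "R a' b * R a' t \<le> res (R a b) (R a t)"
    using assms[rule_format, of a' b t] unfolding cokernel_def biimp_def
    by (meson INF_lower UNIV_I inf_le1 order_trans)
  then show "R a b * conv R b a' * R a' t \<le> R a t"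
    by (metis conv_def mult.assoc mult.commute residuation)
qed

lemma difun_uniform:
  assumes "difun R"
  shows "R a b1 * R a b2 \<le> cokernel R b1 b2"
  unfolding cokernel_def biimp_def
proof (intro INF_greatest le_infI)
  fix a'
  show "R a b1 * R a b2 \<le> res (R a' b1) (R a' b2)"
    using difun_pt[OF assms, of a' b1 a b2]
    by (simp add: residuation[symmetric] mult.commute mult.left_commute)
  show "R a b1 * R a b2 \<le> res (R a' b2) (R a' b1)"
    using difun_pt[OF assms, of a' b2 a b1]
    by (simp add: residuation[symmetric] mult.commute mult.left_commute)
qed

lemma comp_monoL: "X \<le> Y \<Longrightarrow> X \<bullet> Q \<le> Y \<bullet> (Q::_ \<Rightarrow> _ \<Rightarrow> 'l::complete_residuated_lattice)"
  by (rule comp_mono) auto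

lemma comp_monoR: "X \<le> Y \<Longrightarrow> P \<bullet> X \<le> P \<bullet> (Y::_ \<Rightarrow> _ \<Rightarrow> 'l::complete_residuated_lattice)"
  by (rule comp_mono) auto

lemma res_one: "res 1 y \<le> (y::'l::complete_residuated_lattice)"
  using res_le[of 1 y] by simp

lemma kernel_eq:
  assumes "uniform R"
  shows "kernel R = R \<bullet> conv (R::_ \<Rightarrow> _ \<Rightarrow> 'l::complete_residuated_lattice)"
proof (intro ext antisym)
  fix a1 a2
  have d: "difun R" using assms uniform_difun unfolding uniform_def by blast
  obtain b where b: "R a1 b = 1" using assms unfolding uniform_def by blast
  have "kernel R a1 a2 \<le> biimp (R a1 b) (R a2 b)"
    unfolding kernel_def by (rule INF_lower) simp
  also have "\<dots> \<le> res 1 (R a2 b)" unfolding biimp_def b by simp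
  also have "\<dots> \<le> R a2 b" by (rule res_one)
  also have "\<dots> = R a1 b * conv R b a2" by (simp add: b conv_def)
  also have "\<dots> \<le> (R \<bullet> conv R) a1 a2" by (rule comp_ge)
  finally show "kernel R a1 a2 \<le> (R \<bullet> conv R) a1 a2" .
  show "(R \<bullet> conv R) a1 a2 \<le> kernel R a1 a2"
    unfolding rcomp_def kernel_def biimp_def conv_def
  proof (intro SUP_least INF_greatest le_infI)
    fix b b'
    show "R a1 b * R a2 b \<le> res (R a1 b') (R a2 b')"
      using difun_pt[OF d, of a2 b a1 b']
      by (simp add: residuation[symmetric] mult.commute mult.left_commute)
    show "R a1 b * R a2 b \<le> res (R a2 b') (R a1 b')"
      using difun_pt[OF d, of a1 b a2 b']
      by (simp add: residuation[symmetric] mult.commute mult.left_commute)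
  qed
qed

lemma cokernel_eq:
  assumes "uniform R"
  shows "cokernel R = conv R \<bullet> (R::_ \<Rightarrow> _ \<Rightarrow> 'l::complete_residuated_lattice)"
proof (intro ext antisym)
  fix b1 b2
  have d: "difun R" using assms uniform_difun unfolding uniform_def by blast
  obtain a where a: "R a b1 = 1" using assms unfolding uniform_def by blast
  have "cokernel R b1 b2 \<le> biimp (R a b1) (R a b2)"
    unfolding cokernel_def by (rule INF_lower) simp
  also have "\<dots> \<le> res 1 (R a b2)" unfolding biimp_def a by simp
  also have "\<dots> \<le> R a b2" by (rule res_one)
  also have "\<dots> = conv R b1 a * R a b2" by (simp add: a conv_def)
  also have "\<dots> \<le> (conv R \<bullet> R) b1 b2" by (rule comp_ge)
  finally show "cokernel R b1 b2 \<le> (conv R \<bullet> R) b1 b2" .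
  show "(conv R \<bullet> R) b1 b2 \<le> cokernel R b1 b2"
    unfolding rcomp_def conv_def
    by (intro SUP_least difun_uniform[OF d])
qed

lemma difun_sub:
  assumes "difun Z" "R \<le> Z" "S \<le> Z"
  shows "R \<bullet> conv S \<bullet> R \<le> (Z::_ \<Rightarrow> _ \<Rightarrow> 'l::complete_residuated_lattice)"
  using assms unfolding difun_def
  by (meson comp_mono conv_mono order_trans)

lemma RRR_sol:
  assumes s: "sol_WL23 V W Z R" and d: "difun Z"
  shows "sol_WL23 V W Z (R \<bullet> conv R \<bullet> (R::_ \<Rightarrow> _ \<Rightarrow> 'l::complete_residuated_lattice))"
  unfolding sol_WL23_def
proof (intro conjI allI)
  fix i
  have h1: "conv R \<bullet> V i \<le> W i \<bullet> conv R" and h2: "R \<bullet> W i \<le> V i \<bullet> R"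
    using s unfolding sol_WL23_def by auto
  have "conv (R \<bullet> conv R \<bullet> R) \<bullet> V i = conv R \<bullet> R \<bullet> (conv R \<bullet> V i)"
    by (simp add: conv_comp comp_assoc)
  also have "\<dots> \<le> conv R \<bullet> R \<bullet> (W i \<bullet> conv R)" by (rule comp_monoR[OF h1])
  also have "\<dots> = conv R \<bullet> (R \<bullet> W i) \<bullet> conv R" by (simp add: comp_assoc)
  also have "\<dots> \<le> conv R \<bullet> (V i \<bullet> R) \<bullet> conv R" by (intro comp_monoL comp_monoR h2)
  also have "\<dots> = (conv R \<bullet> V i) \<bullet> (R \<bullet> conv R)" by (simp add: comp_assoc)
  also have "\<dots> \<le> (W i \<bullet> conv R) \<bullet> (R \<bullet> conv R)" by (intro comp_monoL h1)
  also have "\<dots> = W i \<bullet> conv (R \<bullet> conv R \<bullet> R)" by (simp add: conv_comp comp_assoc)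
  finally show "conv (R \<bullet> conv R \<bullet> R) \<bullet> V i \<le> W i \<bullet> conv (R \<bullet> conv R \<bullet> R)" .
  have "R \<bullet> conv R \<bullet> R \<bullet> W i = R \<bullet> conv R \<bullet> (R \<bullet> W i)" by (simp add: comp_assoc)
  also have "\<dots> \<le> R \<bullet> conv R \<bullet> (V i \<bullet> R)" by (rule comp_monoR[OF h2])
  also have "\<dots> = R \<bullet> (conv R \<bullet> V i) \<bullet> R" by (simp add: comp_assoc)
  also have "\<dots> \<le> R \<bullet> (W i \<bullet> conv R) \<bullet> R" by (intro comp_monoL comp_monoR h1)
  also have "\<dots> = (R \<bullet> W i) \<bullet> (conv R \<bullet> R)" by (simp add: comp_assoc)
  also have "\<dots> \<le> (V i \<bullet> R) \<bullet> (conv R \<bullet> R)" by (intro comp_monoL h2)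
  also have "\<dots> = V i \<bullet> (R \<bullet> conv R \<bullet> R)" by (simp add: comp_assoc)
  finally show "R \<bullet> conv R \<bullet> R \<bullet> W i \<le> V i \<bullet> (R \<bullet> conv R \<bullet> R)" .
next
  show "R \<bullet> conv R \<bullet> R \<le> Z" using s d difun_sub unfolding sol_WL23_def by blast
qed

lemma kern_sol:
  assumes s: "sol_WL23 V W Z R"
  shows "sol_WL14 V (Z \<bullet> conv Z) (R \<bullet> conv (R::_ \<Rightarrow> _ \<Rightarrow> 'l::complete_residuated_lattice))"
proof -
  have c: "conv (R \<bullet> conv R) = R \<bullet> conv R" by (simp add: conv_comp)
  have RZ: "R \<le> Z" using s unfolding sol_WL23_def by auto
  have "R \<bullet> conv R \<le> Z \<bullet> conv Z" by (intro comp_mono conv_mono RZ)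
  moreover have "R \<bullet> conv R \<bullet> V i \<le> V i \<bullet> (R \<bullet> conv R)" for i
  proof -
    have h1: "conv R \<bullet> V i \<le> W i \<bullet> conv R" and h2: "R \<bullet> W i \<le> V i \<bullet> R"
      using s unfolding sol_WL23_def by auto
    have "R \<bullet> conv R \<bullet> V i = R \<bullet> (conv R \<bullet> V i)" by (simp add: comp_assoc)
    also have "\<dots> \<le> R \<bullet> (W i \<bullet> conv R)" by (rule comp_monoR[OF h1])
    also have "\<dots> = (R \<bullet> W i) \<bullet> conv R" by (simp add: comp_assoc)
    also have "\<dots> \<le> (V i \<bullet> R) \<bullet> conv R" by (rule comp_monoL[OF h2])
    also have "\<dots> = V i \<bullet> (R \<bullet> conv R)" by (simp add: comp_assoc)
    finally show ?thesis .
  qed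
  ultimately show ?thesis unfolding sol_WL14_def c by auto
qed

lemma cokern_sol:
  assumes s: "sol_WL23 V W Z R"
  shows "sol_WL14 W (conv Z \<bullet> Z) (conv R \<bullet> (R::_ \<Rightarrow> _ \<Rightarrow> 'l::complete_residuated_lattice))"
proof -
  have c: "conv (conv R \<bullet> R) = conv R \<bullet> R" by (simp add: conv_comp)
  have RZ: "R \<le> Z" using s unfolding sol_WL23_def by auto
  have "conv R \<bullet> R \<le> conv Z \<bullet> Z" by (intro comp_mono conv_mono RZ)
  moreover have "conv R \<bullet> R \<bullet> W i \<le> W i \<bullet> (conv R \<bullet> R)" for i
  proof -
    have h1: "conv R \<bullet> V i \<le> W i \<bullet> conv R" and h2: "R \<bullet> W i \<le> V i \<bullet> R"
      using s unfolding sol_WL23_def by auto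
    have "conv R \<bullet> R \<bullet> W i = conv R \<bullet> (R \<bullet> W i)" by (simp add: comp_assoc)
    also have "\<dots> \<le> conv R \<bullet> (V i \<bullet> R)" by (rule comp_monoR[OF h2])
    also have "\<dots> = (conv R \<bullet> V i) \<bullet> R" by (simp add: comp_assoc)
    also have "\<dots> \<le> (W i \<bullet> conv R) \<bullet> R" by (rule comp_monoL[OF h1])
    also have "\<dots> = W i \<bullet> (conv R \<bullet> R)" by (simp add: comp_assoc)
    finally show ?thesis .
  qed
  ultimately show ?thesis unfolding sol_WL14_def c by auto
qed

lemma kern_greatest:
  assumes s: "sol_WL23 V W Z R" and g: "\<forall>U. sol_WL23 V W Z U \<longrightarrow> U \<le> R"
    and d: "difun Z" and u: "uniform R"
    and s': "sol_WL14 V (Z \<bullet> conv Z) U"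
  shows "U \<le> R \<bullet> conv (R::_ \<Rightarrow> _ \<Rightarrow> 'l::complete_residuated_lattice)"
proof -
  have RZ: "R \<le> Z" using s unfolding sol_WL23_def by auto
  have UZ: "U \<le> Z \<bullet> conv Z" using s' unfolding sol_WL14_def by auto
  have "sol_WL23 V W Z (U \<bullet> R)"
    unfolding sol_WL23_def
  proof (intro conjI allI)
    fix i
    have h1: "conv R \<bullet> V i \<le> W i \<bullet> conv R" and h2: "R \<bullet> W i \<le> V i \<bullet> R"
      using s unfolding sol_WL23_def by auto
    have g1: "U \<bullet> V i \<le> V i \<bullet> U" and g2: "conv U \<bullet> V i \<le> V i \<bullet> conv U"
      using s' unfolding sol_WL14_def by auto
    have "conv (U \<bullet> R) \<bullet> V i = conv R \<bullet> (conv U \<bullet> V i)" by (simp add: conv_comp comp_assoc)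
    also have "\<dots> \<le> conv R \<bullet> (V i \<bullet> conv U)" by (rule comp_monoR[OF g2])
    also have "\<dots> = (conv R \<bullet> V i) \<bullet> conv U" by (simp add: comp_assoc)
    also have "\<dots> \<le> (W i \<bullet> conv R) \<bullet> conv U" by (rule comp_monoL[OF h1])
    also have "\<dots> = W i \<bullet> conv (U \<bullet> R)" by (simp add: conv_comp comp_assoc)
    finally show "conv (U \<bullet> R) \<bullet> V i \<le> W i \<bullet> conv (U \<bullet> R)" .
    have "U \<bullet> R \<bullet> W i = U \<bullet> (R \<bullet> W i)" by (simp add: comp_assoc)
    also have "\<dots> \<le> U \<bullet> (V i \<bullet> R)" by (rule comp_monoR[OF h2])
    also have "\<dots> = (U \<bullet> V i) \<bullet> R" by (simp add: comp_assoc)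
    also have "\<dots> \<le> (V i \<bullet> U) \<bullet> R" by (rule comp_monoL[OF g1])
    also have "\<dots> = V i \<bullet> (U \<bullet> R)" by (simp add: comp_assoc)
    finally show "U \<bullet> R \<bullet> W i \<le> V i \<bullet> (U \<bullet> R)" .
  next
    have "U \<bullet> R \<le> Z \<bullet> conv Z \<bullet> Z" by (intro comp_mono UZ RZ)
    also have "\<dots> \<le> Z" using d unfolding difun_def .
    finally show "U \<bullet> R \<le> Z" .
  qed
  then have UR: "U \<bullet> R \<le> R" using g by blast
  show ?thesis unfolding le_fun_def
  proof (intro allI)
    fix a1 a2
    obtain b where b: "R a2 b = 1" using u unfolding uniform_def by blast
    have "U a1 a2 = U a1 a2 * R a2 b" by (simp add: b)
    also have "\<dots> \<le> (U \<bullet> R) a1 b" by (rule comp_ge)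
    also have "\<dots> \<le> R a1 b" using UR unfolding le_fun_def by blast
    also have "\<dots> = R a1 b * conv R b a2" by (simp add: b conv_def)
    also have "\<dots> \<le> (R \<bullet> conv R) a1 a2" by (rule comp_ge)
    finally show "U a1 a2 \<le> (R \<bullet> conv R) a1 a2" .
  qed
qed

lemma cokern_greatest:
  assumes s: "sol_WL23 V W Z R" and g: "\<forall>U. sol_WL23 V W Z U \<longrightarrow> U \<le> R"
    and d: "difun Z" and u: "uniform R"
    and s': "sol_WL14 W (conv Z \<bullet> Z) U"
  shows "U \<le> conv R \<bullet> (R::_ \<Rightarrow> _ \<Rightarrow> 'l::complete_residuated_lattice)"
proof -
  have RZ: "R \<le> Z" using s unfolding sol_WL23_def by auto
  have UZ: "U \<le> conv Z \<bullet> Z" using s' unfolding sol_WL14_def by auto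
  have "sol_WL23 V W Z (R \<bullet> U)"
    unfolding sol_WL23_def
  proof (intro conjI allI)
    fix i
    have h1: "conv R \<bullet> V i \<le> W i \<bullet> conv R" and h2: "R \<bullet> W i \<le> V i \<bullet> R"
      using s unfolding sol_WL23_def by auto
    have g1: "U \<bullet> W i \<le> W i \<bullet> U" and g2: "conv U \<bullet> W i \<le> W i \<bullet> conv U"
      using s' unfolding sol_WL14_def by auto
    have "conv (R \<bullet> U) \<bullet> V i = conv U \<bullet> (conv R \<bullet> V i)" by (simp add: conv_comp comp_assoc)
    also have "\<dots> \<le> conv U \<bullet> (W i \<bullet> conv R)" by (rule comp_monoR[OF h1])
    also have "\<dots> = (conv U \<bullet> W i) \<bullet> conv R" by (simp add: comp_assoc)
    also have "\<dots> \<le> (W i \<bullet> conv U) \<bullet> conv R" by (rule comp_monoL[OF g2])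
    also have "\<dots> = W i \<bullet> conv (R \<bullet> U)" by (simp add: conv_comp comp_assoc)
    finally show "conv (R \<bullet> U) \<bullet> V i \<le> W i \<bullet> conv (R \<bullet> U)" .
    have "R \<bullet> U \<bullet> W i = R \<bullet> (U \<bullet> W i)" by (simp add: comp_assoc)
    also have "\<dots> \<le> R \<bullet> (W i \<bullet> U)" by (rule comp_monoR[OF g1])
    also have "\<dots> = (R \<bullet> W i) \<bullet> U" by (simp add: comp_assoc)
    also have "\<dots> \<le> (V i \<bullet> R) \<bullet> U" by (rule comp_monoL[OF h2])
    also have "\<dots> = V i \<bullet> (R \<bullet> U)" by (simp add: comp_assoc)
    finally show "R \<bullet> U \<bullet> W i \<le> V i \<bullet> (R \<bullet> U)" .
  next
    have "R \<bullet> U \<le> Z \<bullet> (conv Z \<bullet> Z)" by (intro comp_mono UZ RZ)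
    also have "\<dots> \<le> Z" using d unfolding difun_def by (simp add: comp_assoc)
    finally show "R \<bullet> U \<le> Z" .
  qed
  then have UR: "R \<bullet> U \<le> R" using g by blast
  show ?thesis unfolding le_fun_def
  proof (intro allI)
    fix b1 b2
    obtain a where a: "R a b1 = 1" using u unfolding uniform_def by blast
    have "U b1 b2 = R a b1 * U b1 b2" by (simp add: a)
    also have "\<dots> \<le> (R \<bullet> U) a b2" by (rule comp_ge)
    also have "\<dots> \<le> R a b2" using UR unfolding le_fun_def by blast
    also have "\<dots> = conv R b1 a * R a b2" by (simp add: a conv_def)
    also have "\<dots> \<le> (conv R \<bullet> R) b1 b2" by (rule comp_ge)
    finally show "U b1 b2 \<le> (conv R \<bullet> R) b1 b2" .
  qed
qed

theorem theorem7p3: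
  fixes V :: "'i \<Rightarrow> 'a \<Rightarrow> 'a \<Rightarrow> 'l::complete_residuated_lattice"
    and W :: "'i \<Rightarrow> 'b \<Rightarrow> 'b \<Rightarrow> 'l"
    and Z R :: "'a \<Rightarrow> 'b \<Rightarrow> 'l"
  assumes "uniform Z"
    and "\<exists>U. sol_WL23 V W Z U \<and> uniform U"
    and "greatest_sol (sol_WL23 V W Z) R"
  shows "uniform R \<and>
         greatest_sol (sol_WL14 V (rcomp Z (conv Z))) (kernel R) \<and>
         greatest_sol (sol_WL14 W (rcomp (conv Z) Z)) (cokernel R)"
proof -
  obtain U where sU: "sol_WL23 V W Z U" and uU: "uniform U" using assms(2) by blast
  have s: "sol_WL23 V W Z R" and g: "\<forall>U. sol_WL23 V W Z U \<longrightarrow> U \<le> R"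
    using assms(3) unfolding greatest_sol_def by auto
  have dZ: "difun Z" using assms(1) uniform_difun unfolding uniform_def by blast
  have UR: "U \<le> R" using g sU by blast
  have one: "R a b = 1" if "U a b = 1" for a b
  proof -
    have "U a b \<le> R a b" using UR unfolding le_fun_def by blast
    then show ?thesis using that by (simp add: one_is_top top_unique)
  qed
  have "R \<bullet> conv R \<bullet> R \<le> R" using g RRR_sol[OF s dZ] by blast
  then have dR: "difun R" unfolding difun_def .
  have uR: "uniform R"
    unfolding uniform_def
  proof (intro conjI allI)
    fix a show "\<exists>b. R a b = 1" using uU one unfolding uniform_def by blast
  next
    fix b show "\<exists>a. R a b = 1" using uU one unfolding uniform_def by blast
  next
    fix a b1 b2 show "R a b1 * R a b2 \<le> cokernel R b1 b2" by (rule difun_uniform[OF dR])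
  qed
  show ?thesis
    unfolding greatest_sol_def kernel_eq[OF uR] cokernel_eq[OF uR]
    using uR kern_sol[OF s] cokern_sol[OF s]
      kern_greatest[OF s g dZ uR] cokern_greatest[OF s g dZ uR]
    by blast
qed

end
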